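(* Let $\mathcal{C}$ be a covering of a finite set $E$ such that both $SH$ and $XH$ (defined below) are closure operators of matroids on $E$. Then $VH$ is also the closure operator of a matroid on $E$, and $\mathcal{I}_{SH}(\mathcal{C})\subseteq\mathcal{I}_{XH}(\mathcal{C})=\mathcal{I}_{VH}(\mathcal{C})$ and $\mathcal{L}_{SH}(M(\mathcal{C}))\subseteq\mathcal{L}_{XH}(M(\mathcal{C}))=\mathcal{L}_{VH}(M(\mathcal{C}))$.
   Context: A covering of $E$ is a family of nonempty subsets of $E$ with union $E$. For $x\in E$: $I(x)=\bigcup\{K\in\mathcal{C}:x\in K\}$ and $N(x)=\bigcap\{K\in\mathcal{C}:x\in K\}$. For $X\subseteq E$: $SH(X)=\bigcup\{K\in\mathcal{C}:K\cap X\neq\emptyset\}$, $XH(X)=\{x:N(x)\cap X\neq\emptyset\}$, $VH(X)=\bigcup\{N(x):N(x)\cap X\neq\emptyset\}$. When an operator $H\in\{SH,XH,VH\}$ is the closure operator of a matroid on $E$ (closure meaning $cl(X)=\{a:r(X\cup\{a\})=r(X)\}$), that matroid has independent sets $\mathcal{I}_H(\mathcal{C})=\{I\subseteq E:x\notin H(I-\{x\})\text{ for all }x\in I\}$, and $\mathcal{L}_H(M(\mathcal{C}))=\{X\subseteq E:H(X)=X\}$ denotes its set of closed sets ordered by inclusion. *)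

theory Defs
  imports Main
begin

definition covering :: "'a set set \<Rightarrow> 'a set \<Rightarrow> bool" where
  "covering C E \<longleftrightarrow> (\<forall>K\<in>C. K \<noteq> {} \<and> K \<subseteq> E) \<and> \<Union>C = E"

definition cov_I :: "'a set set \<Rightarrow> 'a \<Rightarrow> 'a set" where
  "cov_I C x = \<Union>{K\<in>C. x \<in> K}"

definition cov_N :: "'a set set \<Rightarrow> 'a \<Rightarrow> 'a set" where
  "cov_N C x = \<Inter>{K\<in>C. x \<in> K}"

definition SH :: "'a set set \<Rightarrow> 'a set \<Rightarrow> 'a set" where
  "SH C X = \<Union>{K\<in>C. K \<inter> X \<noteq> {}}"

definition XH :: "'a set set \<Rightarrow> 'a set \<Rightarrow> 'a set \<Rightarrow> 'a set" where
  "XH C E X = {x\<in>E. cov_N C x \<inter> X \<noteq> {}}"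

definition VH :: "'a set set \<Rightarrow> 'a set \<Rightarrow> 'a set \<Rightarrow> 'a set" where
  "VH C E X = \<Union>{cov_N C x |x. x \<in> E \<and> cov_N C x \<inter> X \<noteq> {}}"

definition matroid :: "'a set \<Rightarrow> ('a set \<Rightarrow> bool) \<Rightarrow> bool" where
  "matroid E indep \<longleftrightarrow> finite E \<and>
     (\<forall>X. indep X \<longrightarrow> X \<subseteq> E) \<and>
     indep {} \<and>
     (\<forall>X Y. indep X \<and> Y \<subseteq> X \<longrightarrow> indep Y) \<and>
     (\<forall>X Y. indep X \<and> indep Y \<and> card X < card Y \<longrightarrow> (\<exists>y\<in>Y - X. indep (insert y X)))"

definition mrank :: "('a set \<Rightarrow> bool) \<Rightarrow> 'a set \<Rightarrow> nat" where
  "mrank indep X = Max {card I |I. I \<subseteq> X \<and> indep I}"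

definition mclosure :: "'a set \<Rightarrow> ('a set \<Rightarrow> bool) \<Rightarrow> 'a set \<Rightarrow> 'a set" where
  "mclosure E indep X = {a\<in>E. mrank indep (insert a X) = mrank indep X}"

definition is_matroid_closure :: "'a set \<Rightarrow> ('a set \<Rightarrow> 'a set) \<Rightarrow> bool" where
  "is_matroid_closure E H \<longleftrightarrow>
     (\<exists>indep. matroid E indep \<and> (\<forall>X. X \<subseteq> E \<longrightarrow> mclosure E indep X = H X))"

definition indep_sets :: "'a set \<Rightarrow> ('a set \<Rightarrow> 'a set) \<Rightarrow> 'a set set" where
  "indep_sets E H = {I. I \<subseteq> E \<and> (\<forall>x\<in>I. x \<notin> H (I - {x}))}"

definition closed_sets :: "'a set \<Rightarrow> ('a set \<Rightarrow> 'a set) \<Rightarrow> 'a set set" where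
  "closed_sets E H = {X. X \<subseteq> E \<and> H X = X}"

end

theory Submission
  imports Defs
begin

lemma N_props:
  assumes "covering C E" "x \<in> E"
  shows "x \<in> cov_N C x" "cov_N C x \<subseteq> E" "\<And>K. K \<in> C \<Longrightarrow> x \<in> K \<Longrightarrow> cov_N C x \<subseteq> K"
proof -
  obtain K where K: "K \<in> C" "x \<in> K" using assms unfolding covering_def by blast
  show "x \<in> cov_N C x" unfolding cov_N_def by blast
  show "cov_N C x \<subseteq> E" using K assms unfolding cov_N_def covering_def by blast
  show "\<And>K. K \<in> C \<Longrightarrow> x \<in> K \<Longrightarrow> cov_N C x \<subseteq> K" unfolding cov_N_def by blast
qed

lemma mrank_empty:
  assumes "indep {}" shows "mrank indep {} = 0"
proof -
  have "{card I |I. I \<subseteq> {} \<and> indep I} = {0}" using assms by auto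
  then show ?thesis unfolding mrank_def by simp
qed

lemma mrank_single:
  assumes "indep {}" shows "mrank indep {a} \<le> 1"
proof -
  have s: "{card I |I. I \<subseteq> {a} \<and> indep I} \<subseteq> {0,1}"
    by (auto simp: subset_singleton_iff)
  have ne: "{card I |I. I \<subseteq> {a} \<and> indep I} \<noteq> {}" using assms by blast
  have "finite {card I |I. I \<subseteq> {a} \<and> indep I}" using s finite_subset by blast
  then have "Max {card I |I. I \<subseteq> {a} \<and> indep I} \<in> {0,1}" using Max_in[OF _ ne] s by blast
  then show ?thesis unfolding mrank_def by auto
qed

lemma XH_empty: "XH C E {} = {}" unfolding XH_def by simp

lemma N_sym:
  assumes cov: "covering C E" and m: "is_matroid_closure E (XH C E)"
    and x: "x \<in> E" and y: "y \<in> E" and yx: "y \<in> cov_N C x"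
  shows "x \<in> cov_N C y"
proof -
  obtain indep where mi: "matroid E indep" and cl: "\<And>X. X \<subseteq> E \<Longrightarrow> mclosure E indep X = XH C E X"
    using m unfolding is_matroid_closure_def by blast
  have ie: "indep {}" using mi unfolding matroid_def by blast
  have one: "mrank indep {a} = 1" if "a \<in> E" for a
  proof -
    have "a \<notin> mclosure E indep {}" using cl[of "{}"] by (simp add: XH_def)
    then have "mrank indep {a} \<noteq> 0" using that mrank_empty[of indep, OF ie] unfolding mclosure_def by simp
    then show ?thesis using mrank_single[of indep a, OF ie] by linarith
  qed
  have "x \<in> XH C E {y}" unfolding XH_def using x yx by blast
  then have "x \<in> mclosure E indep {y}" using cl[of "{y}"] y by simp
  then have "mrank indep (insert x {y}) = mrank indep {y}" unfolding mclosure_def by simp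
  then have "mrank indep (insert y {x}) = mrank indep {x}" using one x y by (simp add: insert_commute)
  then have "y \<in> mclosure E indep {x}" unfolding mclosure_def using y by simp
  then have "y \<in> XH C E {x}" using cl[of "{x}"] x by simp
  then show ?thesis unfolding XH_def by blast
qed

lemma VH_eq:
  assumes cov: "covering C E" and m: "is_matroid_closure E (XH C E)"
  shows "VH C E X = XH C E X"
proof
  show "VH C E X \<subseteq> XH C E X"
  proof
    fix y assume "y \<in> VH C E X"
    then obtain x where x: "x \<in> E" "cov_N C x \<inter> X \<noteq> {}" "y \<in> cov_N C x"
      unfolding VH_def by blast
    have yE: "y \<in> E" using N_props(2)[OF cov x(1)] x(3) by blast
    have xy: "x \<in> cov_N C y" using N_sym[OF cov m x(1) yE x(3)] .
    have "cov_N C x \<subseteq> cov_N C y"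
    proof
      fix z assume z: "z \<in> cov_N C x"
      show "z \<in> cov_N C y" unfolding cov_N_def
      proof
        fix K assume "K \<in> {K \<in> C. y \<in> K}"
        then have "K \<in> C" "x \<in> K" using xy unfolding cov_N_def by auto
        then show "z \<in> K" using N_props(3)[OF cov x(1)] z by blast
      qed
    qed
    then show "y \<in> XH C E X" unfolding XH_def using yE x(2) by blast
  qed
next
  show "XH C E X \<subseteq> VH C E X"
  proof
    fix x assume "x \<in> XH C E X"
    then have "x \<in> E" "cov_N C x \<inter> X \<noteq> {}" unfolding XH_def by auto
    then show "x \<in> VH C E X" unfolding VH_def using N_props(1)[OF cov] by blast
  qed
qed

lemma XH_sub_SH:
  assumes cov: "covering C E"
  shows "XH C E X \<subseteq> SH C X"
proof
  fix x assume "x \<in> XH C E X"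
  then have x: "x \<in> E" and "cov_N C x \<inter> X \<noteq> {}" unfolding XH_def by auto
  then obtain z where z: "z \<in> cov_N C x" "z \<in> X" by blast
  obtain K where K: "K \<in> C" "x \<in> K" using cov x unfolding covering_def by blast
  then have "z \<in> K" using N_props(3)[OF cov x] z by blast
  then show "x \<in> SH C X" unfolding SH_def using K z by blast
qed

theorem theorem12:
  fixes C :: "'a set set" and E :: "'a set"
  assumes "finite E" and "covering C E"
    and "is_matroid_closure E (SH C)" and "is_matroid_closure E (XH C E)"
  shows "is_matroid_closure E (VH C E)
    \<and> indep_sets E (SH C) \<subseteq> indep_sets E (XH C E)
    \<and> indep_sets E (XH C E) = indep_sets E (VH C E)
    \<and> closed_sets E (SH C) \<subseteq> closed_sets E (XH C E)
    \<and> closed_sets E (XH C E) = closed_sets E (VH C E)"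
proof -
  have eq: "VH C E = XH C E" using VH_eq[OF assms(2,4)] by blast
  have a: "indep_sets E (SH C) \<subseteq> indep_sets E (XH C E)"
    unfolding indep_sets_def using XH_sub_SH[OF assms(2)] by blast
  have b: "closed_sets E (SH C) \<subseteq> closed_sets E (XH C E)"
  proof
    fix X assume "X \<in> closed_sets E (SH C)"
    then have X: "X \<subseteq> E" "SH C X = X" unfolding closed_sets_def by auto
    have "XH C E X \<subseteq> X" using XH_sub_SH[OF assms(2), of X] X by simp
    moreover have "X \<subseteq> XH C E X" unfolding XH_def using X(1) N_props(1)[OF assms(2)] by blast
    ultimately show "X \<in> closed_sets E (XH C E)" unfolding closed_sets_def using X by auto
  qed
  show ?thesis using a b eq assms(4) by simp
qed

end
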